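(* Let $\sigma$ be a set of atomic propositions, let $\bar P$ be a finite sequence of proposition symbols disjoint from $\sigma$ with underlying set $P$, and let $L\subseteq L_\mu[\sigma\cup P]$. Let $(M_1,M_2)$ be a weak directed $\sigma$-separation of a $\sigma$-structure $M$ with interface $\bar X=(x_1,\dots,x_k)$, where $|\bar P|\ge k$. Then there exist a $\sigma$-structure $M'$, a directed $\sigma$-separation $(M_1',M_2')$ of $M'$ with the same interface $\bar X$, and isomorphisms $\pi_1:M_1\to M_1'$ and $\pi_2:M_2\to M_2'$ that are the identity on $\{x_1,\dots,x_k\}$, such that $\mathrm{tp}_{L,\bar P}(M,v,\bar X)=\mathrm{tp}_{L,\bar P}(M',\pi_i(v),\bar X)$ for all $i\in\{1,2\}$ and all $v\in V(M_i)$.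
   Context: $L_\mu[\tau]$ is the modal $\mu$-calculus over propositions $\tau$: formulas from $\top,\bot$, $R,\neg R$, fixpoint variables, $\wedge,\vee,\Diamond,\Box,\mu,\nu$. They are evaluated on structures with edge relation, with $\Diamond/\Box$ ranging over successors. **Marked structures.** $\partial_{\bar P}(M,\bar X)$ expands $M$ so that $P_i$ holds exactly at $x_i$ for $i\le|\bar X|$, and nowhere for larger $i$. **Closures and types.** $\mathrm{CL}(L)$ is the union of the Fischer–Ladner closures of the formulas in $L$. $\mathrm{PT}_P(\varphi)$ is the set of formulas obtained by replacing each occurrence $\Diamond\chi$ by $(\bigvee_{R\in Q}R)\vee\Diamond\chi$ and each occurrence $\Box\chi$ by $(\bigwedge_{R\in Q}\neg R)\wedge\Box\chi$, for freely chosen sets $Q\subseteq P$ (chosen per occurrence). $\mathrm{CL}_P(L)=\bigcup_{\varphi\in\mathrm{CL}(L)}\mathrm{PT}_P(\varphi)$, and $\mathrm{tp}_{L,\bar P}(M,v,\bar X)=\{\varphi\in\mathrm{CL}_P(L):\partial_{\bar P}(M,\bar X),v\models\varphi\}$. **Weak directed separation.** A pair $(M_1,M_2)$ of induced substructures of $M$ is a weak directed $\sigma$-separation with interface $\bar X$ if: - $V(M)=V(M_1)\cup V(M_2)$; - $X=\{x_1,\dots,x_k\}\subseteq V(M_1)\cap V(M_2)$; - there are no edges from $V(M_2)\setminus(V(M_1)\cap V(M_2))$ to $V(M_1)\setminus(V(M_1)\cap V(M_2))$; - there are no edges from $(V(M_1)\cap V(M_2))\setminus X$ to $V(M_1)\setminus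 V(M_2)$. **Directed separation.** It is a (non-weak) directed separation if moreover $X=V(M_1)\cap V(M_2)$ and there are no edges from $V(M_2)\setminus X$ to $V(M_1)\setminus X$. *)

theory Defs
  imports Main
begin

record ('v, 'p) struc =
  verts :: "'v set"
  edges :: "('v \<times> 'v) set"
  lab   :: "'p \<Rightarrow> 'v set"

definition is_struc :: "'p set \<Rightarrow> ('v, 'p) struc \<Rightarrow> bool" where
  "is_struc \<sigma> M \<longleftrightarrow>
     edges M \<subseteq> verts M \<times> verts M \<and>
     (\<forall>p. lab M p \<subseteq> verts M) \<and>
     (\<forall>p. p \<notin> \<sigma> \<longrightarrow> lab M p = {})"

definition induced_sub :: "('v, 'p) struc \<Rightarrow> ('v, 'p) struc \<Rightarrow> bool" where
  "induced_sub N M \<longleftrightarrow>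
     verts N \<subseteq> verts M \<and>
     edges N = edges M \<inter> (verts N \<times> verts N) \<and>
     (\<forall>p. lab N p = lab M p \<inter> verts N)"

definition iso :: "('v \<Rightarrow> 'w) \<Rightarrow> ('v, 'p) struc \<Rightarrow> ('w, 'p) struc \<Rightarrow> bool" where
  "iso \<pi> A B \<longleftrightarrow>
     bij_betw \<pi> (verts A) (verts B) \<and>
     (\<forall>u\<in>verts A. \<forall>w\<in>verts A. (u, w) \<in> edges A \<longleftrightarrow> (\<pi> u, \<pi> w) \<in> edges B) \<and>
     (\<forall>p. \<forall>u\<in>verts A. u \<in> lab A p \<longleftrightarrow> \<pi> u \<in> lab B p)"

text \<open>Marked structure: P_i holds exactly at x_i for i < |X|, nowhere for larger i
(0-based indices); symbols outside P keep their interpretation.\<close>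

definition mark :: "'p list \<Rightarrow> ('v, 'p) struc \<Rightarrow> 'v list \<Rightarrow> ('v, 'p) struc" where
  "mark Ps M X = M\<lparr> lab := (\<lambda>p. if p \<in> set Ps
        then {X ! i | i. i < length X \<and> i < length Ps \<and> Ps ! i = p}
        else lab M p) \<rparr>"

definition weak_dsep ::
  "'p set \<Rightarrow> ('v, 'p) struc \<Rightarrow> ('v, 'p) struc \<Rightarrow> ('v, 'p) struc \<Rightarrow> 'v list \<Rightarrow> bool" where
  "weak_dsep \<sigma> M M1 M2 X \<longleftrightarrow>
     is_struc \<sigma> M \<and> induced_sub M1 M \<and> induced_sub M2 M \<and>
     verts M = verts M1 \<union> verts M2 \<and>
     set X \<subseteq> verts M1 \<inter> verts M2 \<and>
     (\<forall>(u, w) \<in> edges M.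
        \<not> (u \<in> verts M2 - (verts M1 \<inter> verts M2) \<and> w \<in> verts M1 - (verts M1 \<inter> verts M2))) \<and>
     (\<forall>(u, w) \<in> edges M.
        \<not> (u \<in> (verts M1 \<inter> verts M2) - set X \<and> w \<in> verts M1 - verts M2))"

definition dsep ::
  "'p set \<Rightarrow> ('v, 'p) struc \<Rightarrow> ('v, 'p) struc \<Rightarrow> ('v, 'p) struc \<Rightarrow> 'v list \<Rightarrow> bool" where
  "dsep \<sigma> M M1 M2 X \<longleftrightarrow>
     weak_dsep \<sigma> M M1 M2 X \<and>
     set X = verts M1 \<inter> verts M2 \<and>
     (\<forall>(u, w) \<in> edges M. \<not> (u \<in> verts M2 - set X \<and> w \<in> verts M1 - set X))"

datatype 'p fm =
    Top | Bot | Prop 'p | NProp 'p | Var nat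
  | And "'p fm" "'p fm" | Or "'p fm" "'p fm"
  | Dia "'p fm" | Box "'p fm"
  | Mu nat "'p fm" | Nu nat "'p fm"

primrec props :: "'p fm \<Rightarrow> 'p set" where
  "props Top = {}" | "props Bot = {}" | "props (Prop p) = {p}" | "props (NProp p) = {p}"
| "props (Var x) = {}" | "props (And a b) = props a \<union> props b"
| "props (Or a b) = props a \<union> props b" | "props (Dia a) = props a"
| "props (Box a) = props a" | "props (Mu x a) = props a" | "props (Nu x a) = props a"

primrec fv :: "'p fm \<Rightarrow> nat set" where
  "fv Top = {}" | "fv Bot = {}" | "fv (Prop p) = {}" | "fv (NProp p) = {}"
| "fv (Var x) = {x}" | "fv (And a b) = fv a \<union> fv b"
| "fv (Or a b) = fv a \<union> fv b" | "fv (Dia a) = fv a"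
| "fv (Box a) = fv a" | "fv (Mu x a) = fv a - {x}" | "fv (Nu x a) = fv a - {x}"

definition Lmu :: "'p set \<Rightarrow> 'p fm set" where
  "Lmu \<tau> = {\<phi>. props \<phi> \<subseteq> \<tau> \<and> fv \<phi> = {}}"

primrec sem :: "('v, 'p) struc \<Rightarrow> (nat \<Rightarrow> 'v set) \<Rightarrow> 'p fm \<Rightarrow> 'v set" where
  "sem M \<rho> Top = verts M"
| "sem M \<rho> Bot = {}"
| "sem M \<rho> (Prop p) = verts M \<inter> lab M p"
| "sem M \<rho> (NProp p) = verts M - lab M p"
| "sem M \<rho> (Var x) = \<rho> x"
| "sem M \<rho> (And a b) = sem M \<rho> a \<inter> sem M \<rho> b"
| "sem M \<rho> (Or a b) = sem M \<rho> a \<union> sem M \<rho> b"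
| "sem M \<rho> (Dia a) = {v \<in> verts M. \<exists>w. (v, w) \<in> edges M \<and> w \<in> sem M \<rho> a}"
| "sem M \<rho> (Box a) = {v \<in> verts M. \<forall>w. (v, w) \<in> edges M \<longrightarrow> w \<in> sem M \<rho> a}"
| "sem M \<rho> (Mu x a) = lfp (\<lambda>S. verts M \<inter> sem M (\<rho>(x := S)) a)"
| "sem M \<rho> (Nu x a) = gfp (\<lambda>S. verts M \<inter> sem M (\<rho>(x := S)) a)"

definition holds :: "('v, 'p) struc \<Rightarrow> 'v \<Rightarrow> 'p fm \<Rightarrow> bool" where
  "holds M v \<phi> \<longleftrightarrow> v \<in> sem M (\<lambda>_. {}) \<phi>"

primrec subst :: "nat \<Rightarrow> 'p fm \<Rightarrow> 'p fm \<Rightarrow> 'p fm" where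
  "subst x t Top = Top" | "subst x t Bot = Bot"
| "subst x t (Prop p) = Prop p" | "subst x t (NProp p) = NProp p"
| "subst x t (Var y) = (if y = x then t else Var y)"
| "subst x t (And a b) = And (subst x t a) (subst x t b)"
| "subst x t (Or a b) = Or (subst x t a) (subst x t b)"
| "subst x t (Dia a) = Dia (subst x t a)"
| "subst x t (Box a) = Box (subst x t a)"
| "subst x t (Mu y a) = (if y = x then Mu y a else Mu y (subst x t a))"
| "subst x t (Nu y a) = (if y = x then Nu y a else Nu y (subst x t a))"

inductive_set FL :: "'p fm \<Rightarrow> 'p fm set" for \<phi> :: "'p fm" where
  base: "\<phi> \<in> FL \<phi>"
| and1: "And a b \<in> FL \<phi> \<Longrightarrow> a \<in> FL \<phi>"
| and2: "And a b \<in> FL \<phi> \<Longrightarrow> b \<in> FL \<phi>"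
| or1: "Or a b \<in> FL \<phi> \<Longrightarrow> a \<in> FL \<phi>"
| or2: "Or a b \<in> FL \<phi> \<Longrightarrow> b \<in> FL \<phi>"
| dia: "Dia a \<in> FL \<phi> \<Longrightarrow> a \<in> FL \<phi>"
| box: "Box a \<in> FL \<phi> \<Longrightarrow> a \<in> FL \<phi>"
| mu: "Mu x a \<in> FL \<phi> \<Longrightarrow> subst x (Mu x a) a \<in> FL \<phi>"
| nu: "Nu x a \<in> FL \<phi> \<Longrightarrow> subst x (Nu x a) a \<in> FL \<phi>"

definition CL :: "'p fm set \<Rightarrow> 'p fm set" where
  "CL L = (\<Union>\<phi>\<in>L. FL \<phi>)"

text \<open>PT_P(phi): replace every occurrence of Dia chi by (OR_{R in Q} R) or Dia chi and
every Box chi by (AND_{R in Q} not R) and Box chi, Q chosen per occurrence.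
The big disjunction/conjunction is written in the order of the list Ps
(for Q empty it is just Dia chi, resp. Box chi).\<close>

definition disjQ :: "'p list \<Rightarrow> 'p set \<Rightarrow> 'p fm \<Rightarrow> 'p fm" where
  "disjQ Ps Q \<psi> = foldr (\<lambda>R acc. Or (Prop R) acc) (filter (\<lambda>R. R \<in> Q) Ps) \<psi>"

definition conjQ :: "'p list \<Rightarrow> 'p set \<Rightarrow> 'p fm \<Rightarrow> 'p fm" where
  "conjQ Ps Q \<psi> = foldr (\<lambda>R acc. And (NProp R) acc) (filter (\<lambda>R. R \<in> Q) Ps) \<psi>"

primrec PT :: "'p list \<Rightarrow> 'p fm \<Rightarrow> 'p fm set" where
  "PT Ps Top = {Top}" | "PT Ps Bot = {Bot}"
| "PT Ps (Prop p) = {Prop p}" | "PT Ps (NProp p) = {NProp p}"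
| "PT Ps (Var x) = {Var x}"
| "PT Ps (And a b) = {And a' b' | a' b'. a' \<in> PT Ps a \<and> b' \<in> PT Ps b}"
| "PT Ps (Or a b) = {Or a' b' | a' b'. a' \<in> PT Ps a \<and> b' \<in> PT Ps b}"
| "PT Ps (Dia a) = {disjQ Ps Q (Dia a') | Q a'. Q \<subseteq> set Ps \<and> a' \<in> PT Ps a}"
| "PT Ps (Box a) = {conjQ Ps Q (Box a') | Q a'. Q \<subseteq> set Ps \<and> a' \<in> PT Ps a}"
| "PT Ps (Mu x a) = Mu x ` PT Ps a"
| "PT Ps (Nu x a) = Nu x ` PT Ps a"

definition CLP :: "'p list \<Rightarrow> 'p fm set \<Rightarrow> 'p fm set" where
  "CLP Ps L = (\<Union>\<phi>\<in>CL L. PT Ps \<phi>)"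

definition tp :: "'p fm set \<Rightarrow> 'p list \<Rightarrow> ('v, 'p) struc \<Rightarrow> 'v \<Rightarrow> 'v list \<Rightarrow> 'p fm set" where
  "tp L Ps M v X = {\<phi> \<in> CLP Ps L. holds (mark Ps M X) v \<phi>}"

end

theory Submission
  imports Defs
begin

lemma sem_mono: "(\<And>x. \<rho> x \<subseteq> \<rho>' x) \<Longrightarrow> sem M \<rho> \<phi> \<subseteq> sem M \<rho>' \<phi>"
proof (induction \<phi> arbitrary: \<rho> \<rho>')
  case (Mu x a)
  have "\<And>S. verts M \<inter> sem M (\<rho>(x := S)) a \<subseteq> verts M \<inter> sem M (\<rho>'(x := S)) a"
    using Mu by (metis Int_mono fun_upd_apply order_refl)
  then show ?case by (simp add: lfp_mono)
next
  case (Nu x a)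
  have "\<And>S. verts M \<inter> sem M (\<rho>(x := S)) a \<subseteq> verts M \<inter> sem M (\<rho>'(x := S)) a"
    using Nu by (metis Int_mono fun_upd_apply order_refl)
  then show ?case by (simp add: gfp_mono)
next
  case (Dia a) then show ?case by (simp, blast)
next
  case (Box a) then show ?case by (simp, blast)
next
  case (And a b) then show ?case by (simp, blast)
next
  case (Or a b) then show ?case by (simp, blast)
qed auto
lemma sem_fun_mono: "mono (\<lambda>S. verts M \<inter> sem M (\<rho>(x := S)) a)"
  by (rule monoI) (intro Int_mono order_refl sem_mono, simp)

lemma pmorph_sem:
  assumes V: "\<And>a. a \<in> verts A' \<Longrightarrow> h a \<in> verts A"
  and E': "edges A' \<subseteq> verts A' \<times> verts A'"
  and forth: "\<And>a b. (a,b) \<in> edges A' \<Longrightarrow> (h a, h b) \<in> edges A"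
  and bk: "\<And>a w. a \<in> verts A' \<Longrightarrow> (h a, w) \<in> edges A \<Longrightarrow> \<exists>b. (a,b) \<in> edges A' \<and> h b = w"
  and L: "\<And>a p. a \<in> verts A' \<Longrightarrow> a \<in> lab A' p \<longleftrightarrow> h a \<in> lab A p"
  shows "sem A' (\<lambda>x. {a\<in>verts A'. h a \<in> \<rho> x}) \<phi> = {a \<in> verts A'. h a \<in> sem A \<rho> \<phi>}"
proof (induction \<phi> arbitrary: \<rho>)
  case (Dia a)
  show ?case
  proof (rule set_eqI, rule iffI)
    fix u assume "u \<in> sem A' (\<lambda>x. {a \<in> verts A'. h a \<in> \<rho> x}) (Dia a)"
    then show "u \<in> {aa \<in> verts A'. h aa \<in> sem A \<rho> (Dia a)}"
    proof -
      assume "u \<in> sem A' (\<lambda>x. {a \<in> verts A'. h a \<in> \<rho> x}) (Dia a)"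
      then obtain b where "u \<in> verts A'" "(u,b) \<in> edges A'" "b \<in> sem A' (\<lambda>x. {a \<in> verts A'. h a \<in> \<rho> x}) a" by auto
      moreover have "h b \<in> sem A \<rho> a" using Dia calculation(3) by auto
      ultimately show ?thesis using V forth by auto
    qed
  next
    fix u assume u: "u \<in> {aa \<in> verts A'. h aa \<in> sem A \<rho> (Dia a)}"
    then obtain w where "(h u, w) \<in> edges A" "w \<in> sem A \<rho> a" by auto
    with bk u obtain b where "(u,b) \<in> edges A'" "h b = w" by blast
    with E' u \<open>w \<in> sem A \<rho> a\<close> Dia show "u \<in> sem A' (\<lambda>x. {a \<in> verts A'. h a \<in> \<rho> x}) (Dia a)"
      by auto
  qed
next
  case (Box a)
  show ?case
  proof (rule set_eqI, rule iffI)
    fix u assume u: "u \<in> sem A' (\<lambda>x. {a \<in> verts A'. h a \<in> \<rho> x}) (Box a)"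
    have "h u \<in> sem A \<rho> (Box a)"
    proof -
      have "\<forall>w. (h u, w) \<in> edges A \<longrightarrow> w \<in> sem A \<rho> a"
      proof (intro allI impI)
        fix w assume "(h u, w) \<in> edges A"
        with bk u obtain b where "(u,b) \<in> edges A'" "h b = w" by auto
        with u Box show "w \<in> sem A \<rho> a" by auto
      qed
      with u V show ?thesis by auto
    qed
    with u show "u \<in> {aa \<in> verts A'. h aa \<in> sem A \<rho> (Box a)}" by auto
  next
    fix u assume u: "u \<in> {aa \<in> verts A'. h aa \<in> sem A \<rho> (Box a)}"
    then show "u \<in> sem A' (\<lambda>x. {a \<in> verts A'. h a \<in> \<rho> x}) (Box a)"
      using Box E' forth by auto
  qed
next
  case (Mu x a)
  define H where "H = (\<lambda>S. {u\<in>verts A'. h u \<in> S})"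
  define f where "f = (\<lambda>S. verts A \<inter> sem A (\<rho>(x := S)) a)"
  define f' where "f' = (\<lambda>T. verts A' \<inter> sem A' ((\<lambda>y. H (\<rho> y))(x := T)) a)"
  have comm: "f' (H S) = H (f S)" for S
  proof -
    have "(\<lambda>y. H (\<rho> y))(x := H S) = (\<lambda>y. H ((\<rho>(x := S)) y))" by (rule ext) simp
    then have "f' (H S) = verts A' \<inter> sem A' (\<lambda>y. H ((\<rho>(x := S)) y)) a"
      unfolding f'_def by simp
    also have "\<dots> = H (f S)" unfolding f_def H_def using Mu[of "\<rho>(x := S)"] V
      by (auto simp del: fun_upd_apply)
    finally show ?thesis .
  qed
  have mf: "mono f" unfolding f_def by (rule sem_fun_mono)
  have mf': "mono f'" unfolding f'_def by (rule sem_fun_mono)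
  have "lfp f' = H (lfp f)"
  proof (rule antisym)
    show "lfp f' \<subseteq> H (lfp f)"
      by (rule lfp_lowerbound) (metis comm lfp_unfold[OF mf] order_refl)
  next
    define T where "T = lfp f'"
    define G where "G = {v. \<forall>u\<in>verts A'. h u = v \<longrightarrow> u \<in> T}"
    have HG: "H G \<subseteq> T" unfolding H_def G_def by auto
    have "f G \<subseteq> G"
    proof
      fix v assume v: "v \<in> f G"
      show "v \<in> G" unfolding G_def
      proof (intro CollectI ballI impI)
        fix u assume "u \<in> verts A'" "h u = v"
        then have "u \<in> H (f G)" using v by (auto simp: H_def)
        also have "\<dots> = f' (H G)" by (simp add: comm)
        also have "\<dots> \<subseteq> f' T" using mf' HG by (simp add: monoD)
        also have "\<dots> = T" unfolding T_def by (rule lfp_unfold[OF mf', symmetric])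
        finally show "u \<in> T" .
      qed
    qed
    then have "lfp f \<subseteq> G" by (rule lfp_lowerbound)
    then show "H (lfp f) \<subseteq> lfp f'" unfolding H_def G_def T_def by auto
  qed
  then show ?case by (simp add: f_def f'_def H_def)
next
  case (Nu x a)
  define H where "H = (\<lambda>S. {u\<in>verts A'. h u \<in> S})"
  define f where "f = (\<lambda>S. verts A \<inter> sem A (\<rho>(x := S)) a)"
  define f' where "f' = (\<lambda>T. verts A' \<inter> sem A' ((\<lambda>y. H (\<rho> y))(x := T)) a)"
  have comm: "f' (H S) = H (f S)" for S
  proof -
    have "(\<lambda>y. H (\<rho> y))(x := H S) = (\<lambda>y. H ((\<rho>(x := S)) y))" by (rule ext) simp
    then have "f' (H S) = verts A' \<inter> sem A' (\<lambda>y. H ((\<rho>(x := S)) y)) a"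
      unfolding f'_def by simp
    also have "\<dots> = H (f S)" unfolding f_def H_def using Nu[of "\<rho>(x := S)"] V
      by (auto simp del: fun_upd_apply)
    finally show ?thesis .
  qed
  have mf: "mono f" unfolding f_def by (rule sem_fun_mono)
  have mf': "mono f'" unfolding f'_def by (rule sem_fun_mono)
  have "gfp f' = H (gfp f)"
  proof (rule antisym)
    show "H (gfp f) \<subseteq> gfp f'"
      by (rule gfp_upperbound) (metis comm gfp_unfold[OF mf] order_refl)
  next
    define T where "T = gfp f'"
    have TV: "T \<subseteq> verts A'"
    proof -
      have "T = f' T" unfolding T_def by (rule gfp_unfold[OF mf'])
      also have "\<dots> \<subseteq> verts A'" unfolding f'_def by blast
      finally show ?thesis .
    qed
    have THT: "T \<subseteq> H (h ` T)" using TV by (auto simp: H_def)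
    have "h ` T \<subseteq> f (h ` T)"
    proof
      fix v assume "v \<in> h ` T"
      then obtain t where t: "t \<in> T" "v = h t" by auto
      have "T = f' T" unfolding T_def by (rule gfp_unfold[OF mf'])
      also have "\<dots> \<subseteq> f' (H (h ` T))" using mf' THT by (simp add: monoD)
      also have "\<dots> = H (f (h ` T))" by (simp add: comm)
      finally show "v \<in> f (h ` T)" using t by (auto simp: H_def)
    qed
    then have "h ` T \<subseteq> gfp f" by (rule gfp_upperbound)
    then show "gfp f' \<subseteq> H (gfp f)" using TV unfolding H_def T_def by auto
  qed
  then show ?case by (simp add: f_def f'_def H_def)
next
  case (Prop p) show ?case using L V by auto
next
  case (NProp p) show ?case using L V by auto
qed (use V in auto)


lemma holds_transfer:
  assumes V: "\<And>a. a \<in> verts A' \<Longrightarrow> h a \<in> verts A"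
  and E': "edges A' \<subseteq> verts A' \<times> verts A'"
  and forth: "\<And>a b. (a,b) \<in> edges A' \<Longrightarrow> (h a, h b) \<in> edges A"
  and bk: "\<And>a w. a \<in> verts A' \<Longrightarrow> (h a, w) \<in> edges A \<Longrightarrow> \<exists>b. (a,b) \<in> edges A' \<and> h b = w"
  and L: "\<And>a p. a \<in> verts A' \<Longrightarrow> a \<in> lab A' p \<longleftrightarrow> h a \<in> lab A p"
  and a: "a \<in> verts A'"
  shows "holds A' a \<phi> \<longleftrightarrow> holds A (h a) \<phi>"
proof -
  have "(\<lambda>x::nat. {b \<in> verts A'. h b \<in> {}}) = (\<lambda>_. {})" by simp
  then have "sem A' (\<lambda>_. {}) \<phi> = {b \<in> verts A'. h b \<in> sem A (\<lambda>_. {}) \<phi>}"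
    using pmorph_sem[OF V E' forth bk L, of "\<lambda>_. {}" \<phi>] by simp
  then show ?thesis using a unfolding holds_def by auto
qed

theorem theorem4p2:
  fixes \<sigma> :: "'p set" and Ps :: "'p list" and L :: "'p fm set"
    and M M1 M2 :: "('v, 'p) struc" and X :: "'v list"
  assumes "distinct Ps"
    and "set Ps \<inter> \<sigma> = {}"
    and "L \<subseteq> Lmu (\<sigma> \<union> set Ps)"
    and "is_struc \<sigma> M"
    and "weak_dsep \<sigma> M M1 M2 X"
    and "length Ps \<ge> length X"
  shows "\<exists>(M' :: ('v + 'v, 'p) struc) M1' M2' \<pi>1 \<pi>2.
           is_struc \<sigma> M' \<and> dsep \<sigma> M' M1' M2' (map Inl X) \<and>
           iso \<pi>1 M1 M1' \<and> iso \<pi>2 M2 M2' \<and>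
           (\<forall>x\<in>set X. \<pi>1 x = Inl x \<and> \<pi>2 x = Inl x) \<and>
           (\<forall>v\<in>verts M1. tp L Ps M v X = tp L Ps M' (\<pi>1 v) (map Inl X)) \<and>
           (\<forall>v\<in>verts M2. tp L Ps M v X = tp L Ps M' (\<pi>2 v) (map Inl X))"
proof -
  define V1 where "V1 = verts M1"
  define V2 where "V2 = verts M2"
  define E where "E = edges M"
  define XS where "XS = set X"
  have st: "is_struc \<sigma> M" using assms(4) .
  have ws: "weak_dsep \<sigma> M M1 M2 X" using assms(5) .
  have EV: "E \<subseteq> (V1 \<union> V2) \<times> (V1 \<union> V2)" and VM: "verts M = V1 \<union> V2"
    using st ws unfolding is_struc_def weak_dsep_def E_def V1_def V2_def by auto
  have labM: "\<And>p. lab M p \<subseteq> V1 \<union> V2" "\<And>p. p \<notin> \<sigma> \<Longrightarrow> lab M p = {}"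
    using st VM unfolding is_struc_def by auto
  have XS: "XS \<subseteq> V1" "XS \<subseteq> V2" using ws unfolding weak_dsep_def XS_def V1_def V2_def by auto
  have W1: "\<And>u w. (u,w) \<in> E \<Longrightarrow> u \<in> V2 \<Longrightarrow> u \<notin> V1 \<Longrightarrow> w \<in> V1 \<Longrightarrow> w \<in> V2"
    using ws unfolding weak_dsep_def E_def V1_def V2_def by blast
  have W2: "\<And>u w. (u,w) \<in> E \<Longrightarrow> u \<in> V2 \<Longrightarrow> u \<in> V1 \<Longrightarrow> u \<notin> XS \<Longrightarrow> w \<in> V1 \<Longrightarrow> w \<in> V2"
    using ws unfolding weak_dsep_def E_def V1_def V2_def XS_def by blast
  have M1i: "\<And>u w. u \<in> V1 \<Longrightarrow> w \<in> V1 \<Longrightarrow> (u,w) \<in> edges M1 \<longleftrightarrow> (u,w) \<in> E"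
    "\<And>u p. u \<in> V1 \<Longrightarrow> u \<in> lab M1 p \<longleftrightarrow> u \<in> lab M p"
    using ws unfolding weak_dsep_def induced_sub_def E_def V1_def by auto
  have M2i: "\<And>u w. u \<in> V2 \<Longrightarrow> w \<in> V2 \<Longrightarrow> (u,w) \<in> edges M2 \<longleftrightarrow> (u,w) \<in> E"
    "\<And>u p. u \<in> V2 \<Longrightarrow> u \<in> lab M2 p \<longleftrightarrow> u \<in> lab M p"
    using ws unfolding weak_dsep_def induced_sub_def E_def V2_def by auto
  define h :: "'v + 'v \<Rightarrow> 'v" where "h = (\<lambda>a. case a of Inl v \<Rightarrow> v | Inr v \<Rightarrow> v)"
  define V' where "V' = Inl ` V1 \<union> Inr ` (V2 - XS)"
  define E' where "E' = {(a,b). a \<in> V' \<and> b \<in> V' \<and> (h a, h b) \<in> E \<and>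
                           \<not> (a \<in> range Inr \<and> b \<in> Inl ` (V1 - XS))}"
  define lab' where "lab' = (\<lambda>p. {a \<in> V'. h a \<in> lab M p})"
  define M' :: "('v + 'v, 'p) struc" where "M' = \<lparr>verts = V', edges = E', lab = lab'\<rparr>"
  define \<pi>2 :: "'v \<Rightarrow> 'v + 'v" where "\<pi>2 = (\<lambda>v. if v \<in> XS then Inl v else Inr v)"
  define M1' :: "('v + 'v, 'p) struc" where
    "M1' = \<lparr>verts = Inl ` V1, edges = E' \<inter> (Inl ` V1 \<times> Inl ` V1), lab = (\<lambda>p. lab' p \<inter> Inl ` V1)\<rparr>"
  define M2' :: "('v + 'v, 'p) struc" where
    "M2' = \<lparr>verts = \<pi>2 ` V2, edges = E' \<inter> (\<pi>2 ` V2 \<times> \<pi>2 ` V2), lab = (\<lambda>p. lab' p \<inter> \<pi>2 ` V2)\<rparr>"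
  have hInl[simp]: "h (Inl v) = v" and hInr[simp]: "h (Inr v) = v" for v by (simp_all add: h_def)
  have p2V: "\<pi>2 ` V2 = Inl ` XS \<union> Inr ` (V2 - XS)" unfolding \<pi>2_def using XS by auto
  have hp2[simp]: "h (\<pi>2 v) = v" for v by (simp add: \<pi>2_def)
  have int12: "Inl ` V1 \<inter> \<pi>2 ` V2 = Inl ` XS" using p2V XS by auto
  have strM': "is_struc \<sigma> M'"
    unfolding is_struc_def M'_def E'_def lab'_def using labM by auto
  have noback: "\<And>a b. (a,b) \<in> E' \<Longrightarrow> a \<in> \<pi>2 ` V2 - Inl ` XS \<Longrightarrow> b \<in> Inl ` V1 - Inl ` XS \<Longrightarrow> False"
    unfolding E'_def p2V by auto
  have wsep: "weak_dsep \<sigma> M' M1' M2' (map Inl X)"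
    unfolding weak_dsep_def
  proof (intro conjI)
    show "is_struc \<sigma> M'" by (rule strM')
    show "induced_sub M1' M'" unfolding induced_sub_def M1'_def M'_def V'_def by auto
    show "induced_sub M2' M'" unfolding induced_sub_def M2'_def M'_def V'_def p2V using XS by auto
    show "verts M' = verts M1' \<union> verts M2'" unfolding M'_def M1'_def M2'_def V'_def p2V using XS by auto
    show "set (map Inl X) \<subseteq> verts M1' \<inter> verts M2'" unfolding M1'_def M2'_def p2V
      using XS by (auto simp: XS_def)
    show "\<forall>(u, w)\<in>edges M'. \<not> (u \<in> verts M2' - verts M1' \<inter> verts M2' \<and> w \<in> verts M1' - verts M1' \<inter> verts M2')"
      unfolding M'_def M1'_def M2'_def using noback int12 by auto
    show "\<forall>(u, w)\<in>edges M'. \<not> (u \<in> verts M1' \<inter> verts M2' - set (map Inl X) \<and> w \<in> verts M1' - verts M2')"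
      unfolding M1'_def M2'_def using int12 XS_def by auto
  qed
  have dsep: "dsep \<sigma> M' M1' M2' (map Inl X)"
    unfolding dsep_def
  proof (intro conjI)
    show "weak_dsep \<sigma> M' M1' M2' (map Inl X)" by (rule wsep)
    show "set (map Inl X) = verts M1' \<inter> verts M2'" unfolding M1'_def M2'_def using int12 XS_def by auto
    show "\<forall>(u, w)\<in>edges M'. \<not> (u \<in> verts M2' - set (map Inl X) \<and> w \<in> verts M1' - set (map Inl X))"
      unfolding M'_def M1'_def M2'_def using noback XS_def by auto
  qed
  have iso1: "iso Inl M1 M1'"
    unfolding iso_def
  proof (intro conjI ballI allI)
    show "bij_betw Inl (verts M1) (verts M1')" unfolding M1'_def V1_def by (simp add: bij_betw_def)
  next
    fix u w assume "u \<in> verts M1" "w \<in> verts M1"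
    then show "((u, w) \<in> edges M1) = ((Inl u, Inl w) \<in> edges M1')"
      unfolding M1'_def E'_def V'_def using M1i V1_def by auto
  next
    fix p u assume "u \<in> verts M1"
    then show "(u \<in> lab M1 p) = (Inl u \<in> lab M1' p)"
      unfolding M1'_def lab'_def V'_def using M1i V1_def by auto
  qed
  have inj2: "inj_on \<pi>2 V2" unfolding inj_on_def \<pi>2_def by auto
  have p2in: "\<pi>2 v \<in> V'" if "v \<in> V2" for v using that XS unfolding \<pi>2_def V'_def by auto
  have iso2: "iso \<pi>2 M2 M2'"
    unfolding iso_def
  proof (intro conjI ballI allI)
    show "bij_betw \<pi>2 (verts M2) (verts M2')" unfolding M2'_def V2_def[symmetric]
      using inj2 by (simp add: bij_betw_def)
  next
    fix u w assume u: "u \<in> verts M2" and w: "w \<in> verts M2"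
    have nb: "\<not> (\<pi>2 w \<in> Inl ` (V1 - XS))" unfolding \<pi>2_def by auto
    show "((u, w) \<in> edges M2) = ((\<pi>2 u, \<pi>2 w) \<in> edges M2')"
      using u w M2i(1) p2in nb unfolding M2'_def E'_def V2_def[symmetric] by auto
  next
    fix p u assume "u \<in> verts M2"
    then show "(u \<in> lab M2 p) = (\<pi>2 u \<in> lab M2' p)"
      unfolding M2'_def lab'_def using M2i p2in V2_def by auto
  qed
  have bk: "\<exists>b. (a,b) \<in> E' \<and> h b = w" if a: "a \<in> V'" and aw: "(h a, w) \<in> E" for a w
  proof -
    have wV: "w \<in> V1 \<union> V2" using aw EV by auto
    show ?thesis
    proof (cases a)
      case (Inl v)
      show ?thesis
      proof (cases "w \<in> V1")
        case True
        then show ?thesis using a aw Inl unfolding E'_def V'_def by (intro exI[of _ "Inl w"]) auto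
      next
        case False
        then have "w \<in> V2 - XS" using wV XS by auto
        then show ?thesis using a aw Inl False unfolding E'_def V'_def by (intro exI[of _ "Inr w"]) auto
      qed
    next
      case (Inr v)
      then have v: "v \<in> V2" "v \<notin> XS" using a unfolding V'_def by auto
      show ?thesis
      proof (cases "w \<in> XS")
        case True
        then show ?thesis using a aw Inr XS unfolding E'_def V'_def by (intro exI[of _ "Inl w"]) auto
      next
        case False
        have "w \<in> V2"
        proof (rule ccontr)
          assume "w \<notin> V2"
          then have "w \<in> V1" using wV by auto
          then show False using W1[of v w] W2[of v w] aw Inr v \<open>w \<notin> V2\<close> by auto
        qed
        then show ?thesis using a aw Inr False unfolding E'_def V'_def by (intro exI[of _ "Inr w"]) auto
      qed
    qed
  qed
  have markV: "verts (mark Ps N Y) = verts N" "edges (mark Ps N Y) = edges N" for N :: "('a, 'p) struc" and Y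
    unfolding mark_def by simp_all
  have labmark: "a \<in> lab (mark Ps M' (map Inl X)) p \<longleftrightarrow> h a \<in> lab (mark Ps M X) p"
    if a: "a \<in> V'" for a p
  proof (cases "p \<in> set Ps")
    case True
    show ?thesis
    proof (cases a)
      case (Inl v)
      then show ?thesis using True unfolding mark_def by (auto, metis nth_map)
    next
      case (Inr v)
      then have "v \<notin> set X" using a unfolding V'_def XS_def by auto
      then show ?thesis using True Inr unfolding mark_def by (auto dest: nth_mem)
    qed
  next
    case False
    then show ?thesis using a unfolding mark_def M'_def lab'_def by auto
  qed
  have holdsT: "holds (mark Ps M' (map Inl X)) a \<phi> \<longleftrightarrow> holds (mark Ps M X) (h a) \<phi>"
    if a: "a \<in> V'" for a \<phi>
  proof (rule holds_transfer)
    show "\<And>a. a \<in> verts (mark Ps M' (map Inl X)) \<Longrightarrow> h a \<in> verts (mark Ps M X)"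
      unfolding markV M'_def V'_def VM by auto
    show "edges (mark Ps M' (map Inl X)) \<subseteq> verts (mark Ps M' (map Inl X)) \<times> verts (mark Ps M' (map Inl X))"
      unfolding markV M'_def E'_def by auto
    show "\<And>a b. (a, b) \<in> edges (mark Ps M' (map Inl X)) \<Longrightarrow> (h a, h b) \<in> edges (mark Ps M X)"
      unfolding markV M'_def E'_def E_def by auto
    show "\<And>a w. a \<in> verts (mark Ps M' (map Inl X)) \<Longrightarrow> (h a, w) \<in> edges (mark Ps M X) \<Longrightarrow>
            \<exists>b. (a, b) \<in> edges (mark Ps M' (map Inl X)) \<and> h b = w"
      unfolding markV M'_def E_def[symmetric] using bk by simp
    show "\<And>a p. a \<in> verts (mark Ps M' (map Inl X)) \<Longrightarrow>
            (a \<in> lab (mark Ps M' (map Inl X)) p) = (h a \<in> lab (mark Ps M X) p)"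
      unfolding markV using labmark by (simp add: M'_def)
    show "a \<in> verts (mark Ps M' (map Inl X))" unfolding markV M'_def using a by simp
  qed
  have tpT: "tp L Ps M (h a) X = tp L Ps M' a (map Inl X)" if "a \<in> V'" for a
    unfolding tp_def using holdsT[OF that] by auto
  show ?thesis
  proof (intro exI conjI)
    show "is_struc \<sigma> M'" by (rule strM')
    show "dsep \<sigma> M' M1' M2' (map Inl X)" by (rule dsep)
    show "iso Inl M1 M1'" by (rule iso1)
    show "iso \<pi>2 M2 M2'" by (rule iso2)
    show "\<forall>x\<in>set X. Inl x = Inl x \<and> \<pi>2 x = Inl x" unfolding \<pi>2_def XS_def by auto
    show "\<forall>v\<in>verts M1. tp L Ps M v X = tp L Ps M' (Inl v) (map Inl X)"
      using tpT[of "Inl _"] unfolding V'_def V1_def by auto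
    show "\<forall>v\<in>verts M2. tp L Ps M v X = tp L Ps M' (\<pi>2 v) (map Inl X)"
      using tpT p2in unfolding V2_def by (metis hp2)
  qed
qed

end
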